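(* Let $S$ be the $3\times 8$ matrix \[ S=\begin{bmatrix} 0 & \epsilon_1 & 0 & 0 & \epsilon_2 & \epsilon_3 & 0 & \epsilon_4 \\ 0 & 0 & -1 & 0 & -1 & 0 & -1 & -1 \\ 0 & 0 & 0 & -1 & 0 & -1 & -1 & -1 \end{bmatrix}, \] where $\epsilon_1,\epsilon_2,\epsilon_3,\epsilon_4\in\{-1,1\}$ and at least one $\epsilon_i$ equals $1$. Let $\sigma=(\sigma_1,\sigma_2,\sigma_3,\sigma_4)\in\{+,-\}^4$ with $\sigma_i$ the sign of $\epsilon_i$, and let $r\in[0,1)^3$ be such that $r+S$ is totally $1$-submodular. (i) If $\sigma \in \{(+,-,+,-),(-,+,-,+)\}$, then $r \in \mathrm{conv}\{(0,\tfrac14,\tfrac12)^\intercal,(0,\tfrac34,\tfrac12)^\intercal\}$. (ii) If $\sigma \in \{(+,+,-,-),(-,-,+,+)\}$, then $r \in \mathrm{conv}\{(0,\tfrac12,\tfrac14)^\intercal,(0,\tfrac12,\tfrac34)^\intercal\}$. (iii) If $\sigma$ is none of the four sign vectors listed in (i) and (ii), then $r=(0,\tfrac12,\tfrac12)^\intercal$.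
   Context: A real matrix is totally $1$-submodular if every square submatrix (of every size) has determinant of absolute value at most $1$. For $r\in\mathbb{R}^3$, $r+S$ denotes the matrix obtained by adding $r$ to every column of $S$. (Such $S$ are exactly the Sauer Matrices of size 3 and type $(1,2)$: each subset of $\{1,2,3\}$ is the support of exactly one column, and exactly the first row contains an entry equal to $1$.) *)

theory Defs
  imports "HOL-Analysis.Analysis" "Jordan_Normal_Form.DL_Submatrix" "Jordan_Normal_Form.Determinant"
begin

definition tot_1_submod :: "real mat \<Rightarrow> bool" where
  "tot_1_submod A \<longleftrightarrow>
     (\<forall>I J. I \<subseteq> {0..<dim_row A} \<longrightarrow> J \<subseteq> {0..<dim_col A} \<longrightarrow> card I = card J \<longrightarrow>
        \<bar>Determinant.det (submatrix A I J)\<bar> \<le> 1)"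

definition sauer_S :: "real \<Rightarrow> real \<Rightarrow> real \<Rightarrow> real \<Rightarrow> real mat" where
  "sauer_S e1 e2 e3 e4 = mat_of_rows_list 8
     [[0, e1, 0, 0, e2, e3, 0, e4],
      [0, 0, -1, 0, -1, 0, -1, -1],
      [0, 0, 0, -1, 0, -1, -1, -1]]"

definition add_col :: "real \<times> real \<times> real \<Rightarrow> real mat \<Rightarrow> real mat" where
  "add_col r S = mat (dim_row S) (dim_col S)
     (\<lambda>(i,j). S $$ (i,j) + (if i = 0 then fst r else if i = 1 then fst (snd r) else snd (snd r)))"

end

theory Submission
  imports Defs
begin

lemma det1: "(A :: 'a :: comm_ring_1 mat) \<in> carrier_mat 1 1 \<Longrightarrow> det A = A $$ (0,0)"
  by (subst laplace_expansion_column[of A 1 0]) (auto simp: cofactor_def mat_delete_def)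

lemma det2: "(A :: 'a :: comm_ring_1 mat) \<in> carrier_mat 2 2 \<Longrightarrow>
   det A = A $$ (0,0) * A $$ (1,1) - A $$ (0,1) * A $$ (1,0)"
  apply (subst laplace_expansion_column[of A 2 0], simp, simp)
  apply (simp add: cofactor_def numeral_2_eq_2 lessThan_Suc)
  apply (subst det1, simp add: mat_delete_def)+
  apply (simp add: mat_delete_def)
  done

lemma det3: "(A :: 'a :: comm_ring_1 mat) \<in> carrier_mat 3 3 \<Longrightarrow>
   det A = A $$ (0,0) * (A $$ (1,1) * A $$ (2,2) - A $$ (1,2) * A $$ (2,1))
         - A $$ (1,0) * (A $$ (0,1) * A $$ (2,2) - A $$ (0,2) * A $$ (2,1))
         + A $$ (2,0) * (A $$ (0,1) * A $$ (1,2) - A $$ (0,2) * A $$ (1,1))"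
proof -
  assume A: "A \<in> carrier_mat 3 3"
  have c: "mat_delete A i 0 \<in> carrier_mat 2 2" for i using mat_delete_carrier[OF A, of i 0] by simp
  have "det A = (\<Sum>i<3. A $$ (i,0) * cofactor A i 0)" using laplace_expansion_column[OF A, of 0] by simp
  also have "\<dots> = A $$ (0,0) * cofactor A 0 0 + A $$ (1,0) * cofactor A 1 0 + A $$ (2,0) * cofactor A 2 0"
    by (simp add: numeral_3_eq_3 lessThan_Suc numeral_2_eq_2)
  also have "cofactor A 0 0 = A $$ (1,1) * A $$ (2,2) - A $$ (1,2) * A $$ (2,1)"
    unfolding cofactor_def det2[OF c] using A by (simp add: mat_delete_def numeral_2_eq_2)
  also have "cofactor A 1 0 = - (A $$ (0,1) * A $$ (2,2) - A $$ (0,2) * A $$ (2,1))"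
    unfolding cofactor_def det2[OF c] using A by (simp add: mat_delete_def numeral_2_eq_2)
  also have "cofactor A 2 0 = A $$ (0,1) * A $$ (1,2) - A $$ (0,2) * A $$ (1,1)"
    unfolding cofactor_def det2[OF c] using A by (simp add: mat_delete_def numeral_2_eq_2)
  finally show ?thesis by (simp add: field_simps)
qed

lemma pick2: "a < (b::nat) \<Longrightarrow> pick {a,b} 0 = a \<and> pick {a,b} 1 = b"
proof -
  assume h: "a < b"
  have 0: "pick {a,b} 0 = a" using h by (auto intro!: Least_equality)
  have 1: "pick {a,b} 1 = b" using h 0 by (auto intro!: Least_equality)
  show ?thesis using 0 1 by simp
qed

lemma pick3: "a < (b::nat) \<Longrightarrow> b < c \<Longrightarrow> pick {a,b,c} 0 = a \<and> pick {a,b,c} 1 = b \<and> pick {a,b,c} 2 = c"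
proof -
  assume h: "a < b" "b < c"
  have 0: "pick {a,b,c} 0 = a" using h by (auto intro!: Least_equality)
  have 1: "pick {a,b,c} 1 = b" using h 0 by (auto intro!: Least_equality)
  have "pick {a,b,c} 2 = c" using h 1 by (auto simp: numeral_2_eq_2 intro!: Least_equality)
  thus ?thesis using 0 1 by simp
qed

lemma T3:
  assumes T: "tot_1_submod A" and A: "A \<in> carrier_mat 3 8"
    and j: "j0 < j1" "j1 < j2" "j2 < 8"
  shows "\<bar>A $$ (0,j0) * (A $$ (1,j1) * A $$ (2,j2) - A $$ (1,j2) * A $$ (2,j1))
         - A $$ (1,j0) * (A $$ (0,j1) * A $$ (2,j2) - A $$ (0,j2) * A $$ (2,j1))
         + A $$ (2,j0) * (A $$ (0,j1) * A $$ (1,j2) - A $$ (0,j2) * A $$ (1,j1))\<bar> \<le> 1"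
proof -
  let ?I = "{0,1,2::nat}" and ?J = "{j0,j1,j2}"
  let ?B = "submatrix A ?I ?J"
  have I: "{i. i<dim_row A \<and> i\<in>?I} = ?I" using A by auto
  have J': "{i. i<dim_col A \<and> i\<in>?J} = ?J" using A j by auto
  have cI: "card ?I = 3" by simp
  have cJ: "card ?J = 3" using j by simp
  have B3: "?B \<in> carrier_mat 3 3" by (rule carrier_matI) (simp_all only: dim_submatrix I J' cI cJ)
  have e: "?B $$ (i,k) = A $$ (pick ?I i, pick ?J k)" if "i<3" "k<3" for i k
    by (rule submatrix_index) (unfold I J' cI cJ, simp_all add: that)
  have pI: "pick ?I 0 = 0" "pick ?I 1 = 1" "pick ?I 2 = 2" using pick3[of 0 1 2] by auto
  have pJ: "pick ?J 0 = j0" "pick ?J 1 = j1" "pick ?J 2 = j2" using pick3[of j0 j1 j2] j by auto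
  have bd: "\<bar>det ?B\<bar> \<le> 1" using T A j cI cJ unfolding tot_1_submod_def by auto
  have e00: "?B $$ (0,0) = A $$ (0,j0)" by (rule e[of 0 0, unfolded pI pJ]) simp_all
  have e01: "?B $$ (0,1) = A $$ (0,j1)" by (rule e[of 0 1, unfolded pI pJ]) simp_all
  have e02: "?B $$ (0,2) = A $$ (0,j2)" by (rule e[of 0 2, unfolded pI pJ]) simp_all
  have e10: "?B $$ (1,0) = A $$ (1,j0)" by (rule e[of 1 0, unfolded pI pJ]) simp_all
  have e11: "?B $$ (1,1) = A $$ (1,j1)" by (rule e[of 1 1, unfolded pI pJ]) simp_all
  have e12: "?B $$ (1,2) = A $$ (1,j2)" by (rule e[of 1 2, unfolded pI pJ]) simp_all
  have e20: "?B $$ (2,0) = A $$ (2,j0)" by (rule e[of 2 0, unfolded pI pJ]) simp_all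
  have e21: "?B $$ (2,1) = A $$ (2,j1)" by (rule e[of 2 1, unfolded pI pJ]) simp_all
  have e22: "?B $$ (2,2) = A $$ (2,j2)" by (rule e[of 2 2, unfolded pI pJ]) simp_all
  moreover have "det ?B = A $$ (0,j0) * (A $$ (1,j1) * A $$ (2,j2) - A $$ (1,j2) * A $$ (2,j1))
         - A $$ (1,j0) * (A $$ (0,j1) * A $$ (2,j2) - A $$ (0,j2) * A $$ (2,j1))
         + A $$ (2,j0) * (A $$ (0,j1) * A $$ (1,j2) - A $$ (0,j2) * A $$ (1,j1))"
    unfolding det3[OF B3] e00 e01 e02 e10 e11 e12 e20 e21 e22 by (rule refl)
  ultimately show ?thesis using bd by simp
qed

lemma T2:
  assumes T: "tot_1_submod A" and A: "A \<in> carrier_mat 3 8"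
    and i: "i0 < i1" "i1 < 3" and j: "j0 < j1" "j1 < 8"
  shows "\<bar>A $$ (i0,j0) * A $$ (i1,j1) - A $$ (i0,j1) * A $$ (i1,j0)\<bar> \<le> 1"
proof -
  let ?I = "{i0,i1}" and ?J = "{j0,j1}"
  let ?B = "submatrix A ?I ?J"
  have I: "{i. i<dim_row A \<and> i\<in>?I} = ?I" using A i by auto
  have J': "{i. i<dim_col A \<and> i\<in>?J} = ?J" using A j by auto
  have cI: "card ?I = 2" using i by simp
  have cJ: "card ?J = 2" using j by simp
  have B3: "?B \<in> carrier_mat 2 2" by (rule carrier_matI) (simp_all only: dim_submatrix I J' cI cJ)
  have e: "?B $$ (i,k) = A $$ (pick ?I i, pick ?J k)" if "i<2" "k<2" for i k
    by (rule submatrix_index) (unfold I J' cI cJ, simp_all add: that)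
  have pI: "pick ?I 0 = i0" "pick ?I 1 = i1" using pick2[of i0 i1] i by auto
  have pJ: "pick ?J 0 = j0" "pick ?J 1 = j1" using pick2[of j0 j1] j by auto
  have bd: "\<bar>det ?B\<bar> \<le> 1" using T A i j cI cJ unfolding tot_1_submod_def by auto
  have e00: "?B $$ (0,0) = A $$ (i0,j0)" by (rule e[of 0 0, unfolded pI pJ]) simp_all
  have e01: "?B $$ (0,1) = A $$ (i0,j1)" by (rule e[of 0 1, unfolded pI pJ]) simp_all
  have e10: "?B $$ (1,0) = A $$ (i1,j0)" by (rule e[of 1 0, unfolded pI pJ]) simp_all
  have e11: "?B $$ (1,1) = A $$ (i1,j1)" by (rule e[of 1 1, unfolded pI pJ]) simp_all
  moreover have "det ?B = A $$ (i0,j0) * A $$ (i1,j1) - A $$ (i0,j1) * A $$ (i1,j0)"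
    unfolding det2[OF B3] e00 e01 e10 e11 by (rule refl)
  ultimately show ?thesis using bd by simp
qed

lemma T1:
  assumes T: "tot_1_submod A" and A: "A \<in> carrier_mat 3 8"
    and i: "i0 < 3" and j: "j0 < 8"
  shows "\<bar>A $$ (i0,j0)\<bar> \<le> 1"
proof -
  let ?I = "{i0}" and ?J = "{j0}"
  let ?B = "submatrix A ?I ?J"
  have I: "{i. i<dim_row A \<and> i\<in>?I} = ?I" using A i by auto
  have J': "{i. i<dim_col A \<and> i\<in>?J} = ?J" using A j by auto
  have c1: "card {i0} = 1" "card {j0} = 1" by simp_all
  have B3: "?B \<in> carrier_mat 1 1" by (rule carrier_matI) (simp_all only: dim_submatrix I J' c1)
  have e: "?B $$ (0,0) = A $$ (pick ?I 0, pick ?J 0)"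
    by (rule submatrix_index) (unfold I J' c1, simp_all)
  have "\<bar>det ?B\<bar> \<le> 1" using T A i j unfolding tot_1_submod_def by auto
  moreover have "pick ?I 0 = i0" "pick ?J 0 = j0" by (auto intro: Least_equality)
  ultimately show ?thesis unfolding det1[OF B3] e by simp
qed


lemma seg1:
  assumes "1/4 \<le> b" "b \<le> 3/4"
  shows "((0::real), (b::real), (1/2::real)) \<in> convex hull {(0, 1/4, 1/2), (0, 3/4, 1/2)}"
proof -
  have "((0::real), b, (1/2::real)) \<in> closed_segment (0, 1/4, 1/2) (0, 3/4, 1/2)"
    unfolding in_segment
    by (rule exI[of _ "2*b - 1/2"]) (use assms in \<open>auto simp: algebra_simps\<close>)
  thus ?thesis by (simp add: segment_convex_hull)
qed

lemma seg2:
  assumes "1/4 \<le> c" "c \<le> 3/4"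
  shows "((0::real), (1/2::real), (c::real)) \<in> convex hull {(0, 1/2, 1/4), (0, 1/2, 3/4)}"
proof -
  have "((0::real), (1/2::real), c) \<in> closed_segment (0, 1/2, 1/4) (0, 1/2, 3/4)"
    unfolding in_segment
    by (rule exI[of _ "2*c - 1/2"]) (use assms in \<open>auto simp: algebra_simps\<close>)
  thus ?thesis by (simp add: segment_convex_hull)
qed

lemma core:
  fixes e1 e2 e3 e4 b c :: real
  assumes E: "e1 = -1 \<or> e1 = 1" "e2 = -1 \<or> e2 = 1" "e3 = -1 \<or> e3 = 1" "e4 = -1 \<or> e4 = 1"
    and h5: "e1 = 1 \<or> e2 = 1 \<or> e3 = 1 \<or> e4 = 1"
    and ab: "0 \<le> b" "b < 1" "0 \<le> c" "c < 1"
    and G: "\<bar>e1 * b - e3 * b\<bar> \<le> 1"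
      "\<bar>e2 * (b - 1) - e4 * (b - 1)\<bar> \<le> 1"
      "\<bar>e3 * (c - 1) - e4 * (c - 1)\<bar> \<le> 1"
      "\<bar>e1 * c - e2 * c\<bar> \<le> 1"
      "\<bar>c * (e2 * b - e3 * (b - 1)) - b * (e2 * (c - 1) - e3 * c)\<bar> \<le> 1"
      "\<bar>e1 * ((b - 1) * (c - 1) - (b - 1) * c) + b * (e4 * c) - c * (e4 * (b - 1))\<bar> \<le> 1"
      "\<bar>e1 * (b * (c - 1) - (b - 1) * (c - 1)) + b * (e4 * (c - 1)) - c * (e4 * b)\<bar> \<le> 1"
      "\<bar>e2 * (b * (c - 1) - (b - 1) * (c - 1)) - (b - 1) * (e3 * (c - 1)) + c * (e3 * (b - 1))\<bar> \<le> 1"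
      "\<bar>e1 * ((b - 1) * (c - 1) - b * c) - b * (e2 * (c - 1) - e3 * c) + c * (e2 * b - e3 * (b - 1))\<bar> \<le> 1"
      "\<bar>e1 * ((b - 1) * (c - 1) - (b - 1) * c) - b * (e2 * (c - 1) - e4 * c) + c * (e2 * (b - 1) - e4 * (b - 1))\<bar> \<le> 1"
      "\<bar>e1 * (b * (c - 1) - (b - 1) * (c - 1)) - b * (e3 * (c - 1) - e4 * (c - 1)) + c * (e3 * (b - 1) - e4 * b)\<bar> \<le> 1"
      "\<bar>e2 * (b * (c - 1) - (b - 1) * (c - 1)) - (b - 1) * (e3 * (c - 1) - e4 * (c - 1)) + c * (e3 * (b - 1) - e4 * b)\<bar> \<le> 1"
      "\<bar>e1 * ((b - 1) * (c - 1) - b * c) + b * (e3 * c) - c * (e3 * (b - 1))\<bar> \<le> 1"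
      "\<bar>(c - 1) * (e2 * (b - 1) - e4 * (b - 1)) - b * (e2 * (c - 1) - e4 * c)\<bar> \<le> 1"
      "\<bar>e1 * (b * c - (b - 1) * (c - 1)) + b * (e2 * (c - 1)) - c * (e2 * b)\<bar> \<le> 1"
      "\<bar>c * (e3 * (b - 1) - e4 * b) - (b - 1) * (e3 * (c - 1) - e4 * (c - 1))\<bar> \<le> 1"
  shows "((e1,e2,e3,e4) \<in> {(1, -1, 1, -1), (-1, 1, -1, 1)} \<longrightarrow> 1/4 \<le> b \<and> b \<le> 3/4 \<and> c = 1/2)
    \<and> ((e1,e2,e3,e4) \<in> {(1, 1, -1, -1), (-1, -1, 1, 1)} \<longrightarrow> b = 1/2 \<and> 1/4 \<le> c \<and> c \<le> 3/4)
    \<and> ((e1,e2,e3,e4) \<notin> {(1, -1, 1, -1), (-1, 1, -1, 1), (1, 1, -1, -1), (-1, -1, 1, 1)} \<longrightarrow> b = 1/2 \<and> c = 1/2)"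
proof -
  have k0: "b = 1/2 \<and> c = 1/2" if "e1 = -1" "e2 = -1" "e3 = -1" "e4 = 1"
    using G(2) G(3) G(5) ab unfolding that abs_le_iff by (simp add: field_simps)
  have k1: "b = 1/2 \<and> c = 1/2" if "e1 = -1" "e2 = -1" "e3 = 1" "e4 = -1"
    using G(1) G(3) G(6) ab unfolding that abs_le_iff by (simp add: field_simps)
  have k2: "b = 1/2 \<and> 1/4 \<le> c \<and> c \<le> 3/4" if "e1 = -1" "e2 = -1" "e3 = 1" "e4 = 1"
  proof -
    have hb: "b = 1/2" using G(1) G(2) ab unfolding that abs_le_iff by (simp add: field_simps)
    show ?thesis using G(13) G(14) ab unfolding that abs_le_iff hb by (simp add: field_simps)
  qed
  have k3: "b = 1/2 \<and> c = 1/2" if "e1 = -1" "e2 = 1" "e3 = -1" "e4 = -1"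
    using G(2) G(4) G(7) ab unfolding that abs_le_iff by (simp add: field_simps)
  have k4: "1/4 \<le> b \<and> b \<le> 3/4 \<and> c = 1/2" if "e1 = -1" "e2 = 1" "e3 = -1" "e4 = 1"
    using G(4) G(3) G(15) G(16) ab unfolding that abs_le_iff by (simp add: field_simps)
  have k5: "b = 1/2 \<and> c = 1/2" if "e1 = -1" "e2 = 1" "e3 = 1" "e4 = -1"
    using G(9) G(10) G(11) G(12) ab unfolding that abs_le_iff by (simp add: field_simps)
  have k6: "b = 1/2 \<and> c = 1/2" if "e1 = -1" "e2 = 1" "e3 = 1" "e4 = 1"
    using G(1) G(4) G(8) ab unfolding that abs_le_iff by (simp add: field_simps)
  have k7: "b = 1/2 \<and> c = 1/2" if "e1 = 1" "e2 = -1" "e3 = -1" "e4 = -1"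
    using G(1) G(4) G(8) ab unfolding that abs_le_iff by (simp add: field_simps)
  have k8: "b = 1/2 \<and> c = 1/2" if "e1 = 1" "e2 = -1" "e3 = -1" "e4 = 1"
    using G(9) G(10) G(11) G(12) ab unfolding that abs_le_iff by (simp add: field_simps)
  have k9: "1/4 \<le> b \<and> b \<le> 3/4 \<and> c = 1/2" if "e1 = 1" "e2 = -1" "e3 = 1" "e4 = -1"
    using G(4) G(3) G(15) G(16) ab unfolding that abs_le_iff by (simp add: field_simps)
  have k10: "b = 1/2 \<and> c = 1/2" if "e1 = 1" "e2 = -1" "e3 = 1" "e4 = 1"
    using G(2) G(4) G(7) ab unfolding that abs_le_iff by (simp add: field_simps)
  have k11: "b = 1/2 \<and> 1/4 \<le> c \<and> c \<le> 3/4" if "e1 = 1" "e2 = 1" "e3 = -1" "e4 = -1"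
  proof -
    have hb: "b = 1/2" using G(1) G(2) ab unfolding that abs_le_iff by (simp add: field_simps)
    show ?thesis using G(13) G(14) ab unfolding that abs_le_iff hb by (simp add: field_simps)
  qed
  have k12: "b = 1/2 \<and> c = 1/2" if "e1 = 1" "e2 = 1" "e3 = -1" "e4 = 1"
    using G(1) G(3) G(6) ab unfolding that abs_le_iff by (simp add: field_simps)
  have k13: "b = 1/2 \<and> c = 1/2" if "e1 = 1" "e2 = 1" "e3 = 1" "e4 = -1"
    using G(2) G(3) G(5) ab unfolding that abs_le_iff by (simp add: field_simps)
  have k14: "b = 1/2 \<and> c = 1/2" if "e1 = 1" "e2 = 1" "e3 = 1" "e4 = 1"
    using G(5) G(6) G(7) G(8) ab unfolding that abs_le_iff by (simp add: field_simps)
  have kneg: False if "e1 = -1" "e2 = -1" "e3 = -1" "e4 = -1" using h5 that by auto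
  have P1: "1/4 \<le> b \<and> b \<le> 3/4 \<and> c = 1/2"
    if "(e1,e2,e3,e4) \<in> {(1, -1, 1, -1), (-1, 1, -1, 1)}" using that k9 k4 by auto
  have P2: "b = 1/2 \<and> 1/4 \<le> c \<and> c \<le> 3/4"
    if "(e1,e2,e3,e4) \<in> {(1, 1, -1, -1), (-1, -1, 1, 1)}" using that k11 k2 by auto
  have P3: "b = 1/2 \<and> c = 1/2"
    if "(e1,e2,e3,e4) \<notin> {(1, -1, 1, -1), (-1, 1, -1, 1), (1, 1, -1, -1), (-1, -1, 1, 1)}"
    using E that kneg k0 k1 k3 k5 k6 k7 k8 k10 k12 k13 k14 by (elim disjE) simp_all
  show ?thesis using P1 P2 P3 by blast
qed

theorem proposition4p2:
  fixes e1 e2 e3 e4 :: real and r :: "real \<times> real \<times> real"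
  assumes "e1 \<in> {-1, 1}" "e2 \<in> {-1, 1}" "e3 \<in> {-1, 1}" "e4 \<in> {-1, 1}"
    and "e1 = 1 \<or> e2 = 1 \<or> e3 = 1 \<or> e4 = 1"
    and "fst r \<in> {0..<1}" "fst (snd r) \<in> {0..<1}" "snd (snd r) \<in> {0..<1}"
    and "tot_1_submod (add_col r (sauer_S e1 e2 e3 e4))"
  shows "((e1, e2, e3, e4) \<in> {(1, -1, 1, -1), (-1, 1, -1, 1)} \<longrightarrow>
            r \<in> convex hull {(0, 1/4, 1/2), (0, 3/4, 1/2)})
       \<and> ((e1, e2, e3, e4) \<in> {(1, 1, -1, -1), (-1, -1, 1, 1)} \<longrightarrow>
            r \<in> convex hull {(0, 1/2, 1/4), (0, 1/2, 3/4)})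
       \<and> ((e1, e2, e3, e4) \<notin> {(1, -1, 1, -1), (-1, 1, -1, 1), (1, 1, -1, -1), (-1, -1, 1, 1)} \<longrightarrow>
            r = (0, 1/2, 1/2))"
proof -
  obtain a b c where r: "r = (a,b,c)" by (cases r) auto
  let ?M = "add_col r (sauer_S e1 e2 e3 e4)"
  have T: "tot_1_submod ?M" using assms(9) .
  have MC: "?M \<in> carrier_mat 3 8"
    by (rule carrier_matI) (simp_all add: add_col_def sauer_S_def mat_of_rows_list_def)
  have ent: "?M $$ (i,j) = [[a, a+e1, a, a, a+e2, a+e3, a, a+e4],
      [b,b,b-1,b,b-1,b,b-1,b-1],[c,c,c,c-1,c,c-1,c-1,c-1]] ! i ! j" if "i < 3" "j < 8" for i j
    using that by (auto simp: add_col_def sauer_S_def mat_of_rows_list_def r less_Suc_eq numeral_eq_Suc)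
  have ab: "0 \<le> a" "a < 1" "0 \<le> b" "b < 1" "0 \<le> c" "c < 1" using assms(6-8) r by auto
  have a0: "a = 0"
  proof -
    have "\<bar>a + e1\<bar> \<le> 1" using T1[OF T MC, of 0 1] by (simp add: ent)
    moreover have "\<bar>a + e2\<bar> \<le> 1" using T1[OF T MC, of 0 4] by (simp add: ent)
    moreover have "\<bar>a + e3\<bar> \<le> 1" using T1[OF T MC, of 0 5] by (simp add: ent)
    moreover have "\<bar>a + e4\<bar> \<le> 1" using T1[OF T MC, of 0 7] by (simp add: ent)
    ultimately show ?thesis using assms(5) ab by auto
  qed
  note F = T2[OF T MC, of 0 1 1 5] T2[OF T MC, of 0 1 4 7] T2[OF T MC, of 0 2 5 7] T2[OF T MC, of 0 2 1 4]
    T3[OF T MC, of 0 4 5] T3[OF T MC, of 1 2 7] T3[OF T MC, of 1 3 7] T3[OF T MC, of 4 5 6]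
    T3[OF T MC, of 1 4 5] T3[OF T MC, of 1 4 7] T3[OF T MC, of 1 5 7] T3[OF T MC, of 4 5 7]
    T3[OF T MC, of 1 2 5] T3[OF T MC, of 3 4 7] T3[OF T MC, of 1 3 4] T3[OF T MC, of 2 5 7]
  note G = F[simplified ent, simplified, unfolded a0, simplified]
  have E: "e1 = -1 \<or> e1 = 1" "e2 = -1 \<or> e2 = 1" "e3 = -1 \<or> e3 = 1" "e4 = -1 \<or> e4 = 1"
    using assms(1-4) by auto
  note C = core[OF E assms(5) ab(3-6) G]
  have P1: "1/4 \<le> b \<and> b \<le> 3/4 \<and> c = 1/2"
    if "(e1,e2,e3,e4) \<in> {(1, -1, 1, -1), (-1, 1, -1, 1)}" using C that by blast
  have P2: "b = 1/2 \<and> 1/4 \<le> c \<and> c \<le> 3/4"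
    if "(e1,e2,e3,e4) \<in> {(1, 1, -1, -1), (-1, -1, 1, 1)}" using C that by blast
  have P3: "b = 1/2 \<and> c = 1/2"
    if "(e1,e2,e3,e4) \<notin> {(1, -1, 1, -1), (-1, 1, -1, 1), (1, 1, -1, -1), (-1, -1, 1, 1)}" using C that by blast
  show ?thesis unfolding r a0
  proof (intro conjI impI)
    assume h: "(e1,e2,e3,e4) \<in> {(1, -1, 1, -1), (-1, 1, -1, 1)}"
    show "(0, b, c) \<in> convex hull {(0::real, 1/4::real, 1/2::real), (0, 3/4, 1/2)}"
    proof -
      have hc: "c = 1/2" "1/4 \<le> b" "b \<le> 3/4" using P1[OF h] by auto
      show ?thesis unfolding hc(1) by (rule seg1) (use hc in auto)
    qed
  next
    assume h: "(e1,e2,e3,e4) \<in> {(1, 1, -1, -1), (-1, -1, 1, 1)}"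
    show "(0, b, c) \<in> convex hull {(0::real, 1/2::real, 1/4::real), (0, 1/2, 3/4)}"
    proof -
      have hb: "b = 1/2" "1/4 \<le> c" "c \<le> 3/4" using P2[OF h] by auto
      show ?thesis unfolding hb(1) by (rule seg2) (use hb in auto)
    qed
  next
    assume h: "(e1,e2,e3,e4) \<notin> {(1, -1, 1, -1), (-1, 1, -1, 1), (1, 1, -1, -1), (-1, -1, 1, 1)}"
    show "(0::real, b, c) = (0, 1/2, 1/2)" using P3[OF h] by simp
  qed
qed


end
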